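(* Let $L>0$, $\epsilon>0$, $x\in\mathbb{R}$, and set $t=\sqrt{2\epsilon/L}$. Suppose $f,g:[x-t,x+t]\to\mathbb{R}$ are such that (a) $g$ is concave and differentiable on $[x-t,x+t]$, (b) $f'$ exists and is $L$-Lipschitz on $[x-t,x+t]$, and (c) $|f(a)-g(a)|\le\epsilon$ for all $a\in\{x-t,x,x+t\}$. Then $|f'(x)-g'(x)|\le2\sqrt{2L\epsilon}$. *)

theory Defs
  imports "HOL-Analysis.Analysis"
begin

end

theory Submission
  imports Defs
begin

theorem lemma8:
  fixes L \<epsilon> x t :: real and f g f' g' :: "real \<Rightarrow> real"
  assumes "L > 0" and "\<epsilon> > 0"
    and t_def: "t = sqrt (2 * \<epsilon> / L)"
    and g_concave: "concave_on {x - t..x + t} g"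
    and g_deriv: "\<And>y. y \<in> {x - t..x + t} \<Longrightarrow> (g has_real_derivative g' y) (at y within {x - t..x + t})"
    and f_deriv: "\<And>y. y \<in> {x - t..x + t} \<Longrightarrow> (f has_real_derivative f' y) (at y within {x - t..x + t})"
    and f'_lip: "L-lipschitz_on {x - t..x + t} f'"
    and close: "\<And>a. a \<in> {x - t, x, x + t} \<Longrightarrow> \<bar>f a - g a\<bar> \<le> \<epsilon>"
  shows "\<bar>f' x - g' x\<bar> \<le> 2 * sqrt (2 * L * \<epsilon>)"
proof -
  let ?I = "{x - t..x + t}"
  have tpos: "t > 0" using assms by simp
  have tt: "L * t^2 = 2 * \<epsilon>" using assms by (simp add: real_sqrt_pow2 field_simps)
  have ts: "t * sqrt (2 * L * \<epsilon>) = 2 * \<epsilon>"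
  proof -
    have "t * sqrt (2 * L * \<epsilon>) = sqrt (2 * \<epsilon> / L * (2 * L * \<epsilon>))"
      unfolding t_def by (rule real_sqrt_mult[symmetric])
    also have "2 * \<epsilon> / L * (2 * L * \<epsilon>) = (2 * \<epsilon>)^2" using assms by (simp add: field_simps power2_eq_square)
    finally show ?thesis using assms by (metis less_imp_le real_sqrt_abs abs_of_nonneg mult_nonneg_nonneg zero_le_numeral)
  qed
  have xin: "x \<in> ?I" using tpos by simp
  have lipx: "\<bar>f' c - f' x\<bar> \<le> L * t" if "c \<in> ?I" for c
  proof -
    have "dist (f' c) (f' x) \<le> L * dist c x" by (rule lipschitz_onD[OF f'_lip that xin])
    moreover have "dist c x \<le> t" using that by (auto simp: dist_real_def)
    ultimately show ?thesis using assms by (simp add: dist_real_def) (smt (verit) mult_left_mono)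
  qed
  have mv: "\<exists>c\<in>{a<..<b}. f b - f a = f' c * (b - a)" if "a < b" "{a..b} \<subseteq> ?I" for a b
  proof -
    have "\<exists>c\<in>{a<..<b}. f b - f a = (\<lambda>y h. f' y * h) c (b - a)"
    proof (rule mvt_simple[OF that(1)])
      fix y assume "a \<le> y" "y \<le> b"
      then have "y \<in> ?I" using that by auto
      then have "(f has_real_derivative f' y) (at y within {a..b})"
        using f_deriv has_field_derivative_subset that(2) by blast
      then show "(f has_derivative (\<lambda>y h. f' y * h) y) (at y within {a..b})"
        by (simp add: has_field_derivative_def)
    qed
    then show ?thesis by simp
  qed
  obtain c1 where c1: "c1 \<in> {x<..<x+t}" "f (x+t) - f x = f' c1 * t"
    using mv[of x "x+t"] tpos by auto
  obtain c2 where c2: "c2 \<in> {x-t<..<x}" "f x - f (x-t) = f' c2 * (x - (x - t))"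
    using mv[of "x-t" x] tpos by auto
  have l1: "\<bar>f' c1 - f' x\<bar> \<le> L * t" using c1 by (intro lipx) auto
  have l2: "\<bar>f' c2 - f' x\<bar> \<le> L * t" using c2 by (intro lipx) auto
  have cvx: "convex_on ?I (\<lambda>y. - g y)" using g_concave by (simp add: concave_on_def)
  have intx: "x \<in> interior ?I" using tpos by simp
  have dx: "((\<lambda>y. - g y) has_real_derivative - g' x) (at x within ?I)"
    using g_deriv[OF xin] by (rule DERIV_minus)
  have tan: "- g y - - g x \<ge> - g' x * (y - x)" if "y \<in> ?I" for y
    by (rule convex_on_imp_above_tangent[OF cvx _ intx that dx]) simp
  have g1: "g (x+t) - g x \<le> g' x * t" using tan[of "x+t"] tpos by simp
  have g2: "g (x-t) - g x \<le> - g' x * t" using tan[of "x-t"] tpos by simp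
  have e1: "\<bar>f (x+t) - g (x+t)\<bar> \<le> \<epsilon>" "\<bar>f x - g x\<bar> \<le> \<epsilon>" "\<bar>f (x-t) - g (x-t)\<bar> \<le> \<epsilon>"
    using close by auto
  have m1: "f' c1 * t \<ge> (f' x - L * t) * t" using l1 tpos by (intro mult_right_mono) auto
  have m2: "f' c2 * t \<le> (f' x + L * t) * t" using l2 tpos by (intro mult_right_mono) auto
  have A: "(f' x - g' x) * t \<le> L * t^2 + 2 * \<epsilon>"
    using c1(2) m1 g1 e1 by (simp add: abs_le_iff algebra_simps power2_eq_square)
  have B: "(g' x - f' x) * t \<le> L * t^2 + 2 * \<epsilon>"
    using c2(2) m2 g2 e1 by (simp add: abs_le_iff algebra_simps power2_eq_square)
  have "\<bar>f' x - g' x\<bar> * t \<le> L * t^2 + 2 * \<epsilon>"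
    using A B by (cases "f' x - g' x \<ge> 0") (auto simp: algebra_simps)
  then have "\<bar>f' x - g' x\<bar> * t \<le> 2 * sqrt (2 * L * \<epsilon>) * t" using tt ts by (simp add: algebra_simps)
  then show ?thesis using tpos by simp
qed

end
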